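(* The variety generated by the quasivariety of Bochvar algebras (equivalently, the variety generated by $\mathbf{WK}^e$) is axiomatised by the following identities, in the type $\langle\wedge,\vee,\neg,J_2,0,1\rangle$: (K1) $x\vee x\approx x$; (K2) $x\vee y\approx y\vee x$; (K3) $x\vee(y\vee z)\approx(x\vee y)\vee z$; (K4) $\neg\neg x\approx x$; (K5) $x\wedge y\approx\neg(\neg x\vee\neg y)$; (K6) $x\wedge(\neg x\vee y)\approx x\wedge y$; (K7) $0\vee x\approx x$; (K8) $1\approx\neg 0$; (K9) $J_2x\vee\neg J_2x\approx 1$; (K10) $x\vee J_2y\approx x\vee J_2(x\vee y)$; (K11) $x\wedge J_2x\approx x$; (K12) $J_2(x\wedge\neg x)\approx 0$.
   Context: $\mathbf{WK}^e$ is the three-element algebra on $\{0,\tfrac12,1\}$ of type $\langle\wedge,\vee,\neg,J_2,0,1\rangle$ (arities $2,2,1,1,0,0$). Its operations are: - $\neg$ swaps $0$ and $1$ and fixes $\tfrac12$; - $\wedge,\vee$ are the Boolean operations on $\{0,1\}$ and return $\tfrac12$ whenever some argument is $\tfrac12$; - $J_2(1)=1$ and $J_2(\tfrac12)=J_2(0)=0$. The quasivariety of Bochvar algebras is $\mathsf{BCA}=ISP(\mathbf{WK}^e)$. *)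

theory Defs
  imports Main
begin

datatype wk = WZ | WH | WO  (* 0, 1/2, 1 *)

fun wneg :: "wk \<Rightarrow> wk" where
  "wneg WZ = WO" | "wneg WH = WH" | "wneg WO = WZ"

fun wjoin :: "wk \<Rightarrow> wk \<Rightarrow> wk" where
  "wjoin WH y = WH" | "wjoin x WH = WH" | "wjoin WZ WZ = WZ" | "wjoin x y = WO"

fun wmeet :: "wk \<Rightarrow> wk \<Rightarrow> wk" where
  "wmeet WH y = WH" | "wmeet x WH = WH" | "wmeet WO WO = WO" | "wmeet x y = WZ"

fun wJ2 :: "wk \<Rightarrow> wk" where
  "wJ2 WO = WO" | "wJ2 WH = WZ" | "wJ2 WZ = WZ"

record 'a alg =
  carrier :: "'a set"
  meet :: "'a \<Rightarrow> 'a \<Rightarrow> 'a"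
  join :: "'a \<Rightarrow> 'a \<Rightarrow> 'a"
  neg :: "'a \<Rightarrow> 'a"
  jtwo :: "'a \<Rightarrow> 'a"
  zero :: "'a"
  one :: "'a"

definition algebra :: "('a, 'b) alg_scheme \<Rightarrow> bool" where
  "algebra A \<longleftrightarrow>
     (\<forall>x\<in>carrier A. \<forall>y\<in>carrier A. meet A x y \<in> carrier A \<and> join A x y \<in> carrier A) \<and>
     (\<forall>x\<in>carrier A. neg A x \<in> carrier A \<and> jtwo A x \<in> carrier A) \<and>
     zero A \<in> carrier A \<and> one A \<in> carrier A"

definition wk_power :: "'i set \<Rightarrow> ('i \<Rightarrow> wk) alg" where
  "wk_power I = \<lparr> carrier = {f. \<forall>i. i \<notin> I \<longrightarrow> f i = undefined},
     meet = (\<lambda>f g i. if i \<in> I then wmeet (f i) (g i) else undefined),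
     join = (\<lambda>f g i. if i \<in> I then wjoin (f i) (g i) else undefined),
     neg = (\<lambda>f i. if i \<in> I then wneg (f i) else undefined),
     jtwo = (\<lambda>f i. if i \<in> I then wJ2 (f i) else undefined),
     zero = (\<lambda>i. if i \<in> I then WZ else undefined),
     one = (\<lambda>i. if i \<in> I then WO else undefined) \<rparr>"

definition subuniverse :: "'a set \<Rightarrow> ('a, 'b) alg_scheme \<Rightarrow> bool" where
  "subuniverse B A \<longleftrightarrow> B \<subseteq> carrier A \<and>
     (\<forall>x\<in>B. \<forall>y\<in>B. meet A x y \<in> B \<and> join A x y \<in> B) \<and>
     (\<forall>x\<in>B. neg A x \<in> B \<and> jtwo A x \<in> B) \<and> zero A \<in> B \<and> one A \<in> B"

definition hom_onto :: "('c \<Rightarrow> 'a) \<Rightarrow> 'c set \<Rightarrow> ('c, 'd) alg_scheme \<Rightarrow> ('a, 'b) alg_scheme \<Rightarrow> bool" where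
  "hom_onto h B P A \<longleftrightarrow> h ` B = carrier A \<and>
     (\<forall>x\<in>B. \<forall>y\<in>B. h (meet P x y) = meet A (h x) (h y) \<and> h (join P x y) = join A (h x) (h y)) \<and>
     (\<forall>x\<in>B. h (neg P x) = neg A (h x) \<and> h (jtwo P x) = jtwo A (h x)) \<and>
     h (zero P) = zero A \<and> h (one P) = one A"

definition in_HSP :: "'i set \<Rightarrow> ('a, 'b) alg_scheme \<Rightarrow> bool" where
  "in_HSP I A \<longleftrightarrow> algebra A \<and>
     (\<exists>B (h :: ('i \<Rightarrow> wk) \<Rightarrow> 'a). subuniverse B (wk_power I) \<and> hom_onto h B (wk_power I) A)"

text \<open>Membership in the variety V(WK^e) = HSP(WK^e), for an algebra with carrier in type 'a.
  Index sets are taken in the type 'a \<Rightarrow> wk, which is large enough.\<close>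
definition in_V_WK :: "('a, 'b) alg_scheme \<Rightarrow> bool" where
  "in_V_WK A \<longleftrightarrow> (\<exists>I :: ('a \<Rightarrow> wk) set. in_HSP I A)"

definition sat_K :: "('a, 'b) alg_scheme \<Rightarrow> bool" where
  "sat_K A \<longleftrightarrow> (\<forall>x\<in>carrier A. \<forall>y\<in>carrier A. \<forall>z\<in>carrier A.
     join A x x = x \<and>
     join A x y = join A y x \<and>
     join A x (join A y z) = join A (join A x y) z \<and>
     neg A (neg A x) = x \<and>
     meet A x y = neg A (join A (neg A x) (neg A y)) \<and>
     meet A x (join A (neg A x) y) = meet A x y \<and>
     join A (zero A) x = x \<and>
     one A = neg A (zero A) \<and>
     join A (jtwo A x) (neg A (jtwo A x)) = one A \<and>
     join A x (jtwo A y) = join A x (jtwo A (join A x y)) \<and>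
     meet A x (jtwo A x) = x \<and>
     jtwo A (meet A x (neg A x)) = zero A)"

end

theory Submission
  imports Defs
begin

lemma wH: "wmeet x y = WH \<longleftrightarrow> x = WH \<or> y = WH" "wjoin x y = WH \<longleftrightarrow> x = WH \<or> y = WH"
  "wneg x = WH \<longleftrightarrow> x = WH" "wJ2 x \<noteq> WH"
  by (cases x; cases y; simp)+
lemma wmeet_def2: "wmeet x y = wneg (wjoin (wneg x) (wneg y))"
  by (cases x; cases y; simp)

locale kalg =
  fixes C :: "'a set" and jn :: "'a \<Rightarrow> 'a \<Rightarrow> 'a" and mt :: "'a \<Rightarrow> 'a \<Rightarrow> 'a"
    and ng :: "'a \<Rightarrow> 'a" and J :: "'a \<Rightarrow> 'a" and z :: 'a and u :: 'a
  assumes cj[simp,intro]: "x \<in> C \<Longrightarrow> y \<in> C \<Longrightarrow> jn x y \<in> C"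
  and cm[simp,intro]: "x \<in> C \<Longrightarrow> y \<in> C \<Longrightarrow> mt x y \<in> C"
  and cn[simp,intro]: "x \<in> C \<Longrightarrow> ng x \<in> C"
  and cJ[simp,intro]: "x \<in> C \<Longrightarrow> J x \<in> C"
  and cz[simp,intro]: "z \<in> C" and cu[simp,intro]: "u \<in> C"
  and K1: "x \<in> C \<Longrightarrow> jn x x = x"
  and K2: "x \<in> C \<Longrightarrow> y \<in> C \<Longrightarrow> jn x y = jn y x"
  and K3: "x \<in> C \<Longrightarrow> y \<in> C \<Longrightarrow> w \<in> C \<Longrightarrow> jn x (jn y w) = jn (jn x y) w"
  and K4: "x \<in> C \<Longrightarrow> ng (ng x) = x"
  and K5: "x \<in> C \<Longrightarrow> y \<in> C \<Longrightarrow> mt x y = ng (jn (ng x) (ng y))"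
  and K6: "x \<in> C \<Longrightarrow> y \<in> C \<Longrightarrow> mt x (jn (ng x) y) = mt x y"
  and K7: "x \<in> C \<Longrightarrow> jn z x = x"
  and K8: "u = ng z"
  and K9: "x \<in> C \<Longrightarrow> jn (J x) (ng (J x)) = u"
  and K10: "x \<in> C \<Longrightarrow> y \<in> C \<Longrightarrow> jn x (J y) = jn x (J (jn x y))"
  and K11: "x \<in> C \<Longrightarrow> mt x (J x) = x"
  and K12: "x \<in> C \<Longrightarrow> J (mt x (ng x)) = z"
begin

lemma M2: "x \<in> C \<Longrightarrow> y \<in> C \<Longrightarrow> mt x y = mt y x" by (simp add: K5 K2)
lemma M3: "x \<in> C \<Longrightarrow> y \<in> C \<Longrightarrow> w \<in> C \<Longrightarrow> mt x (mt y w) = mt (mt x y) w" by (simp add: K5 K4 K3)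
lemma M1: "x \<in> C \<Longrightarrow> mt x x = x" by (simp add: K5 K1 K4)
lemma dm1: "x \<in> C \<Longrightarrow> y \<in> C \<Longrightarrow> ng (jn x y) = mt (ng x) (ng y)" by (simp add: K5 K4)
lemma dm2: "x \<in> C \<Longrightarrow> y \<in> C \<Longrightarrow> ng (mt x y) = jn (ng x) (ng y)" by (simp add: K5 K4)
lemma K6': "x \<in> C \<Longrightarrow> y \<in> C \<Longrightarrow> jn x (mt (ng x) y) = jn x y"
proof -
  assume x: "x \<in> C" and y: "y \<in> C"
  have "mt (ng x) (jn x (ng y)) = mt (ng x) (ng y)" using K6[of "ng x" "ng y"] x y K4 by simp
  hence "ng (mt (ng x) (jn x (ng y))) = ng (mt (ng x) (ng y))" by simp
  moreover have "ng (mt (ng x) (jn x (ng y))) = jn x (mt (ng x) y)"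
    using dm2[of "ng x" "jn x (ng y)"] dm1[of x "ng y"] x y K4 by simp
  moreover have "ng (mt (ng x) (ng y)) = jn x y" using dm2[of "ng x" "ng y"] x y K4 by simp
  ultimately show ?thesis by simp
qed
lemma nz: "ng u = z" by (simp add: K8 K4)
lemma M7: "x \<in> C \<Longrightarrow> mt u x = x" using K5[of u x] nz K7 K4 by simp
lemma jz: "x \<in> C \<Longrightarrow> jn x z = x" using K2[of x z] K7 by simp
lemma mu: "x \<in> C \<Longrightarrow> mt x u = x" using M2[of x u] M7 by simp
lemma J3: "x \<in> C \<Longrightarrow> y \<in> C \<Longrightarrow> w \<in> C \<Longrightarrow> jn x (jn y w) = jn y (jn x w)"
  by (metis K2 K3)
lemma M3': "x \<in> C \<Longrightarrow> y \<in> C \<Longrightarrow> w \<in> C \<Longrightarrow> mt x (mt y w) = mt y (mt x w)"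
  by (metis M2 M3)
lemma Jidem: "x \<in> C \<Longrightarrow> y \<in> C \<Longrightarrow> jn x (jn x y) = jn x y"
  by (metis K1 K3)
lemma iota: "x \<in> C \<Longrightarrow> mt x (ng x) = mt x z"
  using K6[of x z] by (simp add: jz)
lemma nu: "x \<in> C \<Longrightarrow> jn x (ng x) = jn x u"
  using K6'[of x u] by (simp add: mu)
lemma un: "x \<in> C \<Longrightarrow> jn (ng x) u = jn x u"
  by (metis K2 K4 cn nu)
lemma J0: "J z = z"
  using K12[of z] by (simp add: iota M1)
lemma J1: "J u = u"
  using K11[of u] by (simp add: M7)
lemma JJ: "x \<in> C \<Longrightarrow> jn x (J x) = x"
  using K10[of x z] by (simp add: J0 jz)
lemma JP: "x \<in> C \<Longrightarrow> jn (J x) u = u"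
  by (metis K9 cJ nu)
lemma decomp: "x \<in> C \<Longrightarrow> mt (J x) (jn x u) = x"
proof -
  assume x: "x \<in> C"
  have "ng x = mt (ng x) (ng (J x))" using JJ[OF x] dm1[of x "J x"] x by simp
  hence "jn x (ng x) = jn x (ng (J x))" using K6'[of x "ng (J x)"] x by simp
  hence "jn x u = jn x (ng (J x))" using nu x by simp
  thus ?thesis using K6[of "J x" x] K11[OF x] x K2[of x "ng (J x)"] K4 M2[of x "J x"] by simp
qed
lemma D3: "x \<in> C \<Longrightarrow> jn (J x) (mt x (ng x)) = x"
proof -
  assume x: "x \<in> C"
  have "ng x = jn (ng x) (ng (J x))" using K11[OF x] dm2[of x "J x"] x by simp
  hence "mt x (ng x) = mt x (ng (J x))" using K6[of x "ng (J x)"] x by simp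
  thus ?thesis using K6'[of "J x" x] x K4 M2[of x "ng (J x)"] K2[of x "J x"] JJ by simp
qed

definition P where "P = {x \<in> C. jn x u = u}"
lemma PC: "x \<in> P \<Longrightarrow> x \<in> C" by (simp add: P_def)
lemma Pu: "x \<in> P \<Longrightarrow> jn x u = u" by (simp add: P_def)
lemma Pj: "x \<in> P \<Longrightarrow> y \<in> P \<Longrightarrow> jn x y \<in> P"
proof -
  assume x: "x \<in> P" and y: "y \<in> P"
  have "jn (jn x y) u = jn x (jn y u)" using K3[of x y u] PC[OF x] PC[OF y] by simp
  also have "\<dots> = u" using Pu[OF x] Pu[OF y] by simp
  finally show ?thesis unfolding P_def using PC[OF x] PC[OF y] by simp
qed
lemma Pn: "x \<in> P \<Longrightarrow> ng x \<in> P"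
  unfolding P_def using un[of x] by simp
lemma Pm: "x \<in> P \<Longrightarrow> y \<in> P \<Longrightarrow> mt x y \<in> P"
  using K5[of x y] PC Pj Pn by simp
lemma Pz: "z \<in> P" unfolding P_def using K7[of u] by simp
lemma Pone: "u \<in> P" unfolding P_def using K1[of u] by simp
lemma PJ: "x \<in> C \<Longrightarrow> J x \<in> P" unfolding P_def using JP[of x] by simp
lemma JPid: "x \<in> P \<Longrightarrow> J x = x"
  using decomp[of x] Pu[of x] PC[of x] mu[of "J x"] by simp
lemma uj: "x \<in> P \<Longrightarrow> jn u x = u" using K2[of u x] PC[of x] Pu[of x] by simp
lemma Pcj: "x \<in> P \<Longrightarrow> jn x (ng x) = u" by (simp add: PC Pu nu)
lemma Pcm: "x \<in> P \<Longrightarrow> mt x (ng x) = z"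
proof -
  assume x: "x \<in> P"
  have "mt x (ng x) = ng (jn (ng x) x)" using K5[of x "ng x"] PC[OF x] K4 by simp
  also have "\<dots> = ng u" using Pcj[OF x] K2[of x "ng x"] PC[OF x] by simp
  finally show ?thesis by (simp add: nz)
qed
lemma Pmz: "x \<in> P \<Longrightarrow> mt x z = z"
  using PC[of x] Pcm[of x] iota[of x] by simp
lemma zm: "x \<in> P \<Longrightarrow> mt z x = z" using M2[of z x] PC[of x] Pmz[of x] by simp
lemma abs1: "x \<in> P \<Longrightarrow> y \<in> P \<Longrightarrow> mt x (jn x y) = x"
proof -
  assume x: "x \<in> P" and y: "y \<in> P"
  note c = PC[OF x] PC[OF y]
  have "jn (ng x) (jn x y) = jn (jn (ng x) x) y" using K3 c by simp
  also have "\<dots> = u" using Pcj[OF x] K2[of x "ng x"] c uj[OF y] by simp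
  finally have "jn (ng x) (jn x y) = u" .
  thus ?thesis using K6[of x "jn x y"] c mu by simp
qed
lemma abs2: "x \<in> P \<Longrightarrow> y \<in> P \<Longrightarrow> jn x (mt x y) = x"
proof -
  assume x: "x \<in> P" and y: "y \<in> P"
  note c = PC[OF x] PC[OF y]
  have "mt (ng x) (jn (ng x) (ng y)) = ng x" using abs1[OF Pn[OF x] Pn[OF y]] .
  hence "ng (mt (ng x) (jn (ng x) (ng y))) = x" using K4 c by simp
  thus ?thesis using dm2[of "ng x" "jn (ng x) (ng y)"] K4 c K5[of x y, symmetric] by simp
qed
lemma MA: "x \<in> C \<Longrightarrow> y \<in> C \<Longrightarrow> w \<in> C \<Longrightarrow> mt (mt x y) w = mt x (mt y w)" by (simp add: M3)
lemma JA: "x \<in> C \<Longrightarrow> y \<in> C \<Longrightarrow> w \<in> C \<Longrightarrow> jn (jn x y) w = jn x (jn y w)" by (simp add: K3)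
lemmas mac = MA M2 M3'
lemma Midem: "x \<in> C \<Longrightarrow> y \<in> C \<Longrightarrow> mt x (mt x y) = mt x y" by (simp add: M3 M1)
lemmas jac = JA K2 J3

lemma dist: "x \<in> P \<Longrightarrow> y \<in> P \<Longrightarrow> w \<in> P \<Longrightarrow> mt x (jn y w) = jn (mt x y) (mt x w)"
proof -
  assume xP: "x \<in> P" and yP: "y \<in> P" and wP: "w \<in> P"
  have x: "x \<in> C" and y: "y \<in> C" and w: "w \<in> C" using xP yP wP PC by auto
  define e where "e = mt x (jn y w)"
  define d where "d = jn (mt x y) (mt x w)"
  have eP: "e \<in> P" and dP: "d \<in> P" unfolding e_def d_def using xP yP wP Pj Pm by auto
  have eC: "e \<in> C" and dC: "d \<in> C" using eP dP PC by auto
  have s1: "ng d = mt (jn (ng x) (ng y)) (jn (ng x) (ng w))"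
    unfolding d_def using dm1 dm2 x y w by simp
  have s2: "mt x (ng d) = mt (ng y) (mt x (ng w))"
  proof -
    have "mt x (ng d) = mt (mt x (jn (ng x) (ng y))) (jn (ng x) (ng w))"
      using s1 M3 x y w by simp
    also have "\<dots> = mt (mt x (ng y)) (jn (ng x) (ng w))" using K6 x y by simp
    also have "\<dots> = mt (ng y) (mt x (jn (ng x) (ng w)))" using x y w by (simp add: mac)
    also have "\<dots> = mt (ng y) (mt x (ng w))" using K6 x w by simp
    finally show ?thesis .
  qed
  have s3: "mt e (ng d) = z"
  proof -
    have "mt e (ng d) = mt (jn y w) (mt x (ng d))" unfolding e_def using x y w dC by (simp add: mac)
    also have "\<dots> = mt (jn y w) (mt (ng y) (mt x (ng w)))" using s2 by simp
    also have "\<dots> = mt x (mt (jn y w) (mt (ng y) (ng w)))" using x y w by (simp add: mac)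
    also have "\<dots> = mt x (mt (jn y w) (ng (jn y w)))" using dm1 y w by simp
    also have "\<dots> = z" using Pcm[OF Pj[OF yP wP]] Pmz[OF xP] by simp
    finally show ?thesis .
  qed
  have a1: "jn (mt x y) e = e"
  proof -
    have "mt (mt x y) e = mt x (mt y (jn y w))" unfolding e_def using x y w by (simp add: mac M1 Midem)
    also have "\<dots> = mt x y" using abs1[OF yP wP] by simp
    finally have h: "mt (mt x y) e = mt x y" .
    have "jn (mt x y) e = jn e (mt e (mt x y))" using h M2[of e "mt x y"] K2[of e "mt x y"] x y eC by simp
    also have "\<dots> = e" using abs2[OF eP Pm[OF xP yP]] .
    finally show ?thesis .
  qed
  have a2: "jn (mt x w) e = e"
  proof -
    have "mt (mt x w) e = mt x (mt w (jn y w))" unfolding e_def using x y w by (simp add: mac M1 Midem)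
    also have "\<dots> = mt x w" using abs1[OF wP yP] K2[of y w] y w by simp
    finally have h: "mt (mt x w) e = mt x w" .
    have "jn (mt x w) e = jn e (mt e (mt x w))" using h M2[of e "mt x w"] K2[of e "mt x w"] x w eC by simp
    also have "\<dots> = e" using abs2[OF eP Pm[OF xP wP]] .
    finally show ?thesis .
  qed
  have "jn d e = e" unfolding d_def using a1 a2 K3[of "mt x y" "mt x w" e] x y w eC by simp
  moreover have "jn d (mt (ng d) e) = jn d e" using K6' dC eC by simp
  moreover have "mt (ng d) e = z" using s3 M2[of e "ng d"] eC dC by simp
  ultimately have "d = e" using jz dC by simp
  thus ?thesis unfolding d_def e_def by simp
qed

lemma dist': "x \<in> P \<Longrightarrow> y \<in> P \<Longrightarrow> w \<in> P \<Longrightarrow> jn x (mt y w) = mt (jn x y) (jn x w)"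
proof -
  assume xP: "x \<in> P" and yP: "y \<in> P" and wP: "w \<in> P"
  have x: "x \<in> C" and y: "y \<in> C" and w: "w \<in> C" using xP yP wP PC by auto
  have "mt (ng x) (jn (ng y) (ng w)) = jn (mt (ng x) (ng y)) (mt (ng x) (ng w))"
    using dist[OF Pn[OF xP] Pn[OF yP] Pn[OF wP]] .
  hence "ng (mt (ng x) (jn (ng y) (ng w))) = ng (jn (mt (ng x) (ng y)) (mt (ng x) (ng w)))" by simp
  thus ?thesis using x y w dm1 dm2 K4 by simp
qed

lemma le_of_mt: "x \<in> P \<Longrightarrow> y \<in> P \<Longrightarrow> mt x y = x \<Longrightarrow> jn x y = y"
  by (metis K2 M2 PC abs2)
lemma mt_of_le: "x \<in> P \<Longrightarrow> y \<in> P \<Longrightarrow> jn x y = y \<Longrightarrow> mt x y = x"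
  by (metis abs1)
lemma le_of_disj: "p \<in> P \<Longrightarrow> q \<in> P \<Longrightarrow> mt (ng p) q = z \<Longrightarrow> jn q p = p"
proof -
  assume pP: "p \<in> P" and qP: "q \<in> P" and h: "mt (ng p) q = z"
  have p: "p \<in> C" and q: "q \<in> C" using pP qP PC by auto
  have "q = mt q u" using mu q by simp
  also have "\<dots> = mt q (jn p (ng p))" using Pcj pP by simp
  also have "\<dots> = jn (mt q p) (mt q (ng p))" using dist qP pP Pn by simp
  also have "\<dots> = mt q p" using h M2[of q "ng p"] p q jz by simp
  finally have "mt q p = q" by simp
  thus ?thesis using le_of_mt qP pP by simp
qed

lemma f9: "x \<in> C \<Longrightarrow> y \<in> C \<Longrightarrow> jn x (J (mt (ng x) y)) = jn x (J y)"
proof -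
  assume x: "x \<in> C" and y: "y \<in> C"
  have "jn x (J (mt (ng x) y)) = jn x (J (jn x (mt (ng x) y)))" using K10[of x "mt (ng x) y"] x y by simp
  also have "\<dots> = jn x (J (jn x y))" using K6' x y by simp
  also have "\<dots> = jn x (J y)" using K10[of x y] x y by simp
  finally show ?thesis .
qed
lemma f12: "x \<in> C \<Longrightarrow> y \<in> C \<Longrightarrow> mt x (J (mt x y)) = mt x (J y)"
proof -
  assume x: "x \<in> C" and y: "y \<in> C"
  have h: "jn (ng x) (J (mt x y)) = jn (ng x) (J y)" using f9[of "ng x" y] K4 x y by simp
  have "mt x (J (mt x y)) = mt x (jn (ng x) (J (mt x y)))" using K6 x y by simp
  also have "\<dots> = mt x (J y)" using h K6 x y by simp
  finally show ?thesis .
qed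
lemma Jle: "x \<in> C \<Longrightarrow> y \<in> C \<Longrightarrow> jn (J (mt x y)) (J x) = J x"
proof -
  assume x: "x \<in> C" and y: "y \<in> C"
  have nJ: "ng (J x) \<in> P" using Pn PJ x by simp
  have e1: "mt x (ng (J x)) = mt x z"
  proof -
    have "mt x (ng (J x)) = mt (mt x (J x)) (ng (J x))" using K11 x by simp
    also have "\<dots> = mt x (mt (J x) (ng (J x)))" using MA x by simp
    also have "\<dots> = mt x z" using Pcm PJ x by simp
    finally show ?thesis .
  qed
  have e2: "mt (ng (J x)) (mt x y) = mt (mt x y) (ng (mt x y))"
  proof -
    have "mt (ng (J x)) (mt x y) = mt y (mt x (ng (J x)))" using x y by (simp add: mac)
    also have "\<dots> = mt y (mt x z)" using e1 by simp
    also have "\<dots> = mt (mt x y) z" using x y by (simp add: mac)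
    also have "\<dots> = mt (mt x y) (ng (mt x y))" using iota x y by simp
    finally show ?thesis .
  qed
  have "mt (ng (J x)) (J (mt (ng (J x)) (mt x y))) = mt (ng (J x)) (J (mt x y))"
    using f12 x y by simp
  hence "mt (ng (J x)) (J (mt x y)) = z" using e2 K12 x y Pmz nJ by simp
  thus ?thesis using le_of_disj PJ x y by simp
qed
lemma JMp: "x \<in> C \<Longrightarrow> p \<in> P \<Longrightarrow> J (mt x p) = mt (J x) p"
proof -
  assume x: "x \<in> C" and pP: "p \<in> P"
  have p: "p \<in> C" using pP PC by simp
  have "jn (J (mt p x)) p = p" using Jle[of p x] JPid pP p x by simp
  hence h: "mt (J (mt p x)) p = J (mt p x)" using mt_of_le PJ pP p x by simp
  have "J (mt x p) = J (mt p x)" using M2 x p by simp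
  also have "\<dots> = mt p (J (mt p x))" using h M2 p x by simp
  also have "\<dots> = mt p (J x)" using f12 p x by simp
  finally show ?thesis using M2 p x by simp
qed
lemma JM: "x \<in> C \<Longrightarrow> y \<in> C \<Longrightarrow> J (mt x y) = mt (J x) (J y)"
proof -
  assume x: "x \<in> C" and y: "y \<in> C"
  have "J (mt x (J (mt x y))) = J (mt x (J y))" using f12 x y by simp
  hence h: "mt (J x) (J (mt x y)) = mt (J x) (J y)" using JMp PJ x y by simp
  have "jn (J (mt x y)) (J x) = J x" using Jle x y by simp
  hence "mt (J (mt x y)) (J x) = J (mt x y)" using mt_of_le PJ x y by simp
  thus ?thesis using h M2 x y by simp
qed
lemma Jcompl: "x \<in> C \<Longrightarrow> mt (J x) (J (ng x)) = z"
  using JM[of x "ng x"] K12 by simp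
lemma ma: "a \<in> C \<Longrightarrow> mt a (jn a u) = a"
  using K6[of a a] nu[of a] K2[of a "ng a"] M1 by simp
lemma JD: "a \<in> C \<Longrightarrow> J (jn a u) = jn (J a) (J (ng a))"
proof -
  assume a: "a \<in> C"
  define d where "d = jn (J a) (J (ng a))"
  have dP: "d \<in> P" unfolding d_def using Pj PJ a by simp
  have dC: "d \<in> C" using dP PC by simp
  have ia: "mt (ng a) (ng (ng a)) = mt a (ng a)" using K4 M2 a by simp
  have "jn a (ng a) = jn (jn (J a) (mt a (ng a))) (jn (J (ng a)) (mt (ng a) (ng (ng a))))"
    using D3[of a] D3[of "ng a"] a by simp
  also have "\<dots> = jn d (mt a (ng a))"
  proof -
    define i where "i = mt a (ng a)"
    have i: "i \<in> C" unfolding i_def using a by simp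
    have p: "J a \<in> C" and q: "J (ng a) \<in> C" using a by auto
    have "jn (jn (J a) i) (jn (J (ng a)) i) = jn (J a) (jn i (jn (J (ng a)) i))" using JA[OF p i] q i by simp
    also have "jn i (jn (J (ng a)) i) = jn (J (ng a)) (jn i i)" using J3 i q by simp
    also have "jn i i = i" using K1 i by simp
    also have "jn (J a) (jn (J (ng a)) i) = jn (jn (J a) (J (ng a))) i" using K3 p q i by simp
    finally show ?thesis unfolding d_def i_def using ia by simp
  qed
  finally have "jn a u = jn d (mt a z)" using nu iota a by simp
  moreover have "jn d (J (mt a z)) = jn d (J (jn d (mt a z)))" using K10[of d "mt a z"] dC a by simp
  moreover have "J (mt a z) = z" using K12[of a] iota[of a] a by simp
  ultimately have le1: "jn d (J (jn a u)) = d" using jz dC by simp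
  have "mt (J a) (J (jn a u)) = J a" using JM[of a "jn a u"] ma a by simp
  hence l1: "jn (J a) (J (jn a u)) = J (jn a u)" using le_of_mt PJ a by simp
  have "mt (J (ng a)) (J (jn (ng a) u)) = J (ng a)" using JM[of "ng a" "jn (ng a) u"] ma a by simp
  hence l2: "jn (J (ng a)) (J (jn a u)) = J (jn a u)" using le_of_mt PJ a un by simp
  have "jn d (J (jn a u)) = jn (J a) (jn (J (ng a)) (J (jn a u)))" unfolding d_def using JA a by simp
  also have "\<dots> = J (jn a u)" using l1 l2 by simp
  finally have "jn d (J (jn a u)) = J (jn a u)" .
  thus ?thesis using le1 d_def by simp
qed
lemma Nn: "k \<in> C \<Longrightarrow> a \<in> C \<Longrightarrow> jn k u = k \<Longrightarrow> jn (ng k) (jn a u) = jn k (jn a u)"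
proof -
  assume k: "k \<in> C" and a: "a \<in> C" and h: "jn k u = k"
  have "jn (ng k) (jn a u) = jn (jn (ng k) u) a" using k a by (simp add: jac)
  also have "\<dots> = jn k a" using un h k by simp
  finally have 1: "jn (ng k) (jn a u) = jn k a" .
  have "jn k (jn a u) = jn (jn k u) a" using k a by (simp add: jac)
  thus ?thesis using 1 h by simp
qed
lemma G2: "a \<in> C \<Longrightarrow> b \<in> C \<Longrightarrow> mt (jn a u) (jn b u) = jn (jn a u) (jn b u)"
proof -
  assume a: "a \<in> C" and b: "b \<in> C"
  define n where "n = jn a u"
  define k where "k = jn n (jn b u)"
  have n: "n \<in> C" and kC: "k \<in> C" unfolding n_def k_def using a b by auto
  have nu': "jn n u = n" unfolding n_def using a by (simp add: jac K1 Jidem)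
  have ku: "jn k u = k" unfolding k_def n_def using a b by (simp add: jac K1 Jidem)
  have "mt n (jn b u) = mt n (jn (ng n) (jn b u))" using K6 n b by simp
  also have "\<dots> = mt n k" unfolding k_def using Nn n b nu' by simp
  finally have 1: "mt n (jn b u) = mt n k" .
  have "jn (ng k) n = jn k n" using Nn[of k a] kC a ku n_def by simp
  also have "\<dots> = k" unfolding k_def using n b by (simp add: jac K1 Jidem)
  finally have "jn (ng k) n = k" .
  hence "mt k n = mt k k" using K6[of k n] kC n by simp
  hence "mt k n = k" using M1 kC by simp
  thus ?thesis using 1 M2 n kC k_def n_def by simp
qed
lemma Djoin: "a \<in> C \<Longrightarrow> b \<in> C \<Longrightarrow> J (jn (jn a b) u) = mt (J (jn a u)) (J (jn b u))"
proof -
  assume a: "a \<in> C" and b: "b \<in> C"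
  have "jn (jn a b) u = jn (jn a u) (jn b u)" using a b by (simp add: jac K1 Jidem)
  also have "\<dots> = mt (jn a u) (jn b u)" using G2 a b by simp
  finally show ?thesis using JM a b by simp
qed

definition filt :: "'a set \<Rightarrow> bool" where
  "filt F \<longleftrightarrow> F \<subseteq> P \<and> u \<in> F \<and> (\<forall>x\<in>F. \<forall>y\<in>F. mt x y \<in> F) \<and> (\<forall>x\<in>F. \<forall>y\<in>P. jn x y \<in> F) \<and> z \<notin> F"

lemma filtD: "filt F \<Longrightarrow> F \<subseteq> P" "filt F \<Longrightarrow> u \<in> F" "filt F \<Longrightarrow> x \<in> F \<Longrightarrow> y \<in> F \<Longrightarrow> mt x y \<in> F"
  "filt F \<Longrightarrow> x \<in> F \<Longrightarrow> y \<in> P \<Longrightarrow> jn x y \<in> F" "filt F \<Longrightarrow> z \<notin> F"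
  unfolding filt_def by auto
lemma le_trans: "x \<in> C \<Longrightarrow> y \<in> C \<Longrightarrow> w \<in> C \<Longrightarrow> jn x y = y \<Longrightarrow> jn y w = w \<Longrightarrow> jn x w = w"
proof -
  assume a: "x \<in> C" "y \<in> C" "w \<in> C" and h1: "jn x y = y" and h2: "jn y w = w"
  have "jn x w = jn x (jn y w)" using h2 by simp
  also have "\<dots> = jn (jn x y) w" using K3 a by simp
  finally show ?thesis using h1 h2 by simp
qed

lemma ultra_exists:
  assumes cP: "c \<in> P" and cz: "c \<noteq> z"
  shows "\<exists>M. filt M \<and> c \<in> M \<and> (\<forall>x\<in>P. x \<in> M \<or> ng x \<in> M)"
proof -
  define A where "A = {F. filt F \<and> c \<in> F}"
  define F0 where "F0 = {y \<in> P. jn c y = y}"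
  have cC: "c \<in> C" using cP PC by simp
  have "filt F0"
    unfolding filt_def F0_def
  proof (intro conjI ballI)
    show "{y \<in> P. jn c y = y} \<subseteq> P" by auto
    show "u \<in> {y \<in> P. jn c y = y}" using Pone Pu cP by simp
    fix x y assume x: "x \<in> {y \<in> P. jn c y = y}" and y: "y \<in> {y \<in> P. jn c y = y}"
    thus "mt x y \<in> {y \<in> P. jn c y = y}" using dist'[of c x y] cP Pm by simp
  next
    fix x y assume x: "x \<in> {y \<in> P. jn c y = y}" and y: "y \<in> P"
    thus "jn x y \<in> {y \<in> P. jn c y = y}" using K3[of c x y] cC PC Pj by simp
  next
    show "z \<notin> {y \<in> P. jn c y = y}" using jz cC cz by simp
  qed
  moreover have "c \<in> F0" unfolding F0_def using cP K1 cC by simp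
  ultimately have "F0 \<in> A" unfolding A_def by simp
  hence Ane: "A \<noteq> {}" by auto
  have ch: "\<Union>\<C> \<in> A" if ne: "\<C> \<noteq> {}" and chn: "subset.chain A \<C>" for \<C>
  proof -
    have sub: "\<C> \<subseteq> A" and tot: "\<forall>X\<in>\<C>. \<forall>Y\<in>\<C>. X \<subseteq> Y \<or> Y \<subseteq> X"
      using chn by (auto simp: subset_chain_def)
    have fi: "\<And>F. F \<in> \<C> \<Longrightarrow> filt F \<and> c \<in> F" using sub A_def by auto
    obtain F1 where F1: "F1 \<in> \<C>" using ne by auto
    have "filt (\<Union>\<C>)"
      unfolding filt_def
    proof (intro conjI ballI)
      show "\<Union>\<C> \<subseteq> P" using fi filtD(1) by blast
      show "u \<in> \<Union>\<C>" using fi[OF F1] filtD(2) F1 by blast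
      show "z \<notin> \<Union>\<C>" using fi filtD(5) by blast
    next
      fix x y assume "x \<in> \<Union>\<C>" "y \<in> \<Union>\<C>"
      then obtain X Y where X: "X \<in> \<C>" "x \<in> X" and Y: "Y \<in> \<C>" "y \<in> Y" by auto
      show "mt x y \<in> \<Union>\<C>"
      proof (cases "X \<subseteq> Y")
        case True
        hence "mt x y \<in> Y" using filtD(3)[of Y x y] fi[OF Y(1)] X Y by blast
        thus ?thesis using Y by auto
      next
        case False
        hence "Y \<subseteq> X" using tot X Y by blast
        hence "mt x y \<in> X" using filtD(3)[of X x y] fi[OF X(1)] X Y by blast
        thus ?thesis using X by auto
      qed
    next
      fix x y assume "x \<in> \<Union>\<C>" "y \<in> P"
      then obtain X where X: "X \<in> \<C>" "x \<in> X" by auto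
      hence "jn x y \<in> X" using filtD(4)[of X x y] fi[OF X(1)] \<open>y \<in> P\<close> by blast
      thus "jn x y \<in> \<Union>\<C>" using X by auto
    qed
    moreover have "c \<in> \<Union>\<C>" using fi F1 by blast
    ultimately show ?thesis unfolding A_def by simp
  qed
  obtain M where MA: "M \<in> A" and Mmax: "\<forall>X\<in>A. M \<subseteq> X \<longrightarrow> X = M"
    using subset_Zorn_nonempty[OF Ane ch] by blast
  have fM: "filt M" and cM: "c \<in> M" using MA A_def by auto
  have MP: "M \<subseteq> P" and uM: "u \<in> M" and mM: "\<And>x y. x \<in> M \<Longrightarrow> y \<in> M \<Longrightarrow> mt x y \<in> M"
    and jM: "\<And>x y. x \<in> M \<Longrightarrow> y \<in> P \<Longrightarrow> jn x y \<in> M" and zM: "z \<notin> M"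
    using filtD[OF fM] by auto
  have compl: "x \<in> M \<or> ng x \<in> M" if xP: "x \<in> P" for x
  proof (rule ccontr)
    assume nn: "\<not> (x \<in> M \<or> ng x \<in> M)"
    have xC: "x \<in> C" using xP PC by simp
    define G where "G = {y \<in> P. \<exists>m\<in>M. jn (mt m x) y = y}"
    have MG: "M \<subseteq> G"
    proof
      fix m assume m: "m \<in> M"
      have mP: "m \<in> P" using m MP by auto
      have mC: "m \<in> C" using mP PC by simp
      have "mt (mt m x) m = mt m x" using mC xC by (simp add: mac Midem M1)
      hence "jn (mt m x) m = m" using le_of_mt Pm mP xP by simp
      thus "m \<in> G" unfolding G_def using m mP by auto
    qed
    have "jn (mt u x) x = x" using M7[OF xC] K1[OF xC] by simp
    hence xG: "x \<in> G" unfolding G_def using xP uM by auto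
    have zG: "z \<in> G"
    proof (rule ccontr)
      assume zG: "z \<notin> G"
      have "filt G"
        unfolding filt_def
      proof (intro conjI ballI)
        show "G \<subseteq> P" unfolding G_def by auto
        show "u \<in> G" using MG uM by auto
        show "z \<notin> G" by (rule zG)
      next
        fix y1 y2 assume y1: "y1 \<in> G" and y2: "y2 \<in> G"
        then obtain m1 m2 where m1: "m1 \<in> M" "jn (mt m1 x) y1 = y1" and m2: "m2 \<in> M" "jn (mt m2 x) y2 = y2"
          and y1P: "y1 \<in> P" and y2P: "y2 \<in> P" unfolding G_def by auto
        have m1P: "m1 \<in> P" and m2P: "m2 \<in> P" using m1 m2 MP by auto
        have m1C: "m1 \<in> C" and m2C: "m2 \<in> C" and y1C: "y1 \<in> C" and y2C: "y2 \<in> C"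
          using m1P m2P y1P y2P PC by auto
        define m where "m = mt m1 m2"
        have mM: "m \<in> M" unfolding m_def using mM m1 m2 by simp
        define w where "w = mt m x"
        have wP: "w \<in> P" unfolding w_def m_def using Pm m1P m2P xP by simp
        have wC: "w \<in> C" using wP PC by simp
        have "mt w (mt m1 x) = w" unfolding w_def m_def using m1C m2C xC by (simp add: mac Midem M1)
        hence "jn w (mt m1 x) = mt m1 x" using le_of_mt wP Pm m1P xP by simp
        hence w1: "jn w y1 = y1" using le_trans[of w "mt m1 x" y1] wC m1C xC y1C m1 by simp
        have "mt w (mt m2 x) = w" unfolding w_def m_def using m1C m2C xC by (simp add: mac Midem M1)
        hence "jn w (mt m2 x) = mt m2 x" using le_of_mt wP Pm m2P xP by simp
        hence w2: "jn w y2 = y2" using le_trans[of w "mt m2 x" y2] wC m2C xC y2C m2 by simp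
        have "jn w (mt y1 y2) = mt y1 y2" using dist'[OF wP y1P y2P] w1 w2 by simp
        thus "mt y1 y2 \<in> G" unfolding G_def w_def using mM Pm y1P y2P by auto
      next
        fix y v assume y: "y \<in> G" and vP: "v \<in> P"
        then obtain m where m: "m \<in> M" "jn (mt m x) y = y" and yP: "y \<in> P" unfolding G_def by auto
        have "jn (mt m x) (jn y v) = jn y v" using K3[of "mt m x" y v] m MP PC xC yP vP by auto
        thus "jn y v \<in> G" unfolding G_def using m Pj yP vP by auto
      qed
      moreover have "c \<in> G" using MG cM by auto
      ultimately have "G \<in> A" unfolding A_def by simp
      hence "G = M" using Mmax MG by simp
      thus False using xG nn by simp
    qed
    then obtain m where m: "m \<in> M" and mx: "jn (mt m x) z = z" unfolding G_def by auto
    have mP: "m \<in> P" using m MP by auto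
    have mC: "m \<in> C" using mP PC by simp
    have mxz: "mt m x = z" using mx jz mC xC by simp
    have "m = mt m u" using mu mC by simp
    also have "\<dots> = mt m (jn x (ng x))" using Pcj xP by simp
    also have "\<dots> = jn (mt m x) (mt m (ng x))" using dist mP xP Pn by simp
    also have "\<dots> = mt m (ng x)" using mxz K7 mC xC by simp
    finally have "mt m (ng x) = m" by simp
    hence "jn m (ng x) = ng x" using le_of_mt mP Pn xP by simp
    moreover have "jn m (ng x) \<in> M" using jM[OF m] Pn[OF xP] by simp
    ultimately have "ng x \<in> M" by simp
    thus False using nn by simp
  qed
  show ?thesis using fM cM compl by blast
qed

definition ultra :: "'a set \<Rightarrow> bool" where
  "ultra M \<longleftrightarrow> filt M \<and> (\<forall>x\<in>P. x \<in> M \<or> ng x \<in> M)"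

lemma ultra_sub: "ultra M \<Longrightarrow> x \<in> M \<Longrightarrow> x \<in> P" unfolding ultra_def filt_def by auto
lemma ultra_u: "ultra M \<Longrightarrow> u \<in> M" unfolding ultra_def filt_def by auto
lemma ultra_z: "ultra M \<Longrightarrow> z \<notin> M" unfolding ultra_def filt_def by auto
lemma ultra_compl: "ultra M \<Longrightarrow> x \<in> P \<Longrightarrow> x \<in> M \<or> ng x \<in> M" unfolding ultra_def by auto
lemma ultra_mt: "ultra M \<Longrightarrow> x \<in> P \<Longrightarrow> y \<in> P \<Longrightarrow> mt x y \<in> M \<longleftrightarrow> x \<in> M \<and> y \<in> M"
proof
  assume U: "ultra M" and xP: "x \<in> P" and yP: "y \<in> P"
  have x: "x \<in> C" and y: "y \<in> C" using xP yP PC by auto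
  { assume h: "mt x y \<in> M"
    have "mt (mt x y) x = mt x y" using x y by (simp add: mac Midem M1)
    hence "jn (mt x y) x = x" using le_of_mt Pm xP yP by simp
    moreover have "jn (mt x y) x \<in> M" using h U xP unfolding ultra_def filt_def by blast
    ultimately have xM: "x \<in> M" by simp
    have "mt (mt x y) y = mt x y" using x y by (simp add: mac Midem M1)
    hence "jn (mt x y) y = y" using le_of_mt Pm xP yP by simp
    moreover have "jn (mt x y) y \<in> M" using h U yP unfolding ultra_def filt_def by blast
    ultimately have "y \<in> M" by simp
    with xM show "x \<in> M \<and> y \<in> M" by simp }
  { assume "x \<in> M \<and> y \<in> M"
    thus "mt x y \<in> M" using U unfolding ultra_def filt_def by blast }
qed
lemma ultra_not_both: "ultra M \<Longrightarrow> x \<in> P \<Longrightarrow> x \<in> M \<Longrightarrow> ng x \<notin> M"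
  using ultra_mt[of M x "ng x"] Pn Pcm ultra_z by force
lemma ultra_jn: "ultra M \<Longrightarrow> x \<in> P \<Longrightarrow> y \<in> P \<Longrightarrow> jn x y \<in> M \<longleftrightarrow> x \<in> M \<or> y \<in> M"
proof
  assume U: "ultra M" and xP: "x \<in> P" and yP: "y \<in> P"
  have x: "x \<in> C" and y: "y \<in> C" using xP yP PC by auto
  { assume h: "jn x y \<in> M"
    show "x \<in> M \<or> y \<in> M"
    proof (rule ccontr)
      assume "\<not> (x \<in> M \<or> y \<in> M)"
      hence "ng x \<in> M" "ng y \<in> M" using ultra_compl U xP yP by blast+
      hence "mt (ng x) (ng y) \<in> M" using ultra_mt U Pn xP yP by blast
      hence "ng (jn x y) \<in> M" using dm1 x y by simp
      thus False using ultra_not_both U Pj xP yP h by blast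
    qed }
  { assume "x \<in> M \<or> y \<in> M"
    moreover have "x \<in> M \<Longrightarrow> jn x y \<in> M" using U yP unfolding ultra_def filt_def by blast
    moreover have "y \<in> M \<Longrightarrow> jn y x \<in> M" using U xP unfolding ultra_def filt_def by blast
    ultimately show "jn x y \<in> M" using K2[of x y] x y by auto }
qed

definition phi :: "'a set \<Rightarrow> 'a \<Rightarrow> wk" where
  "phi M a = (if J a \<in> M then WO else if J (ng a) \<in> M then WZ else WH)"

lemma ultra_excl: "ultra M \<Longrightarrow> a \<in> C \<Longrightarrow> \<not> (J a \<in> M \<and> J (ng a) \<in> M)"
  using ultra_mt[of M "J a" "J (ng a)"] PJ Jcompl ultra_z by force
lemma ultra_D: "ultra M \<Longrightarrow> a \<in> C \<Longrightarrow> J (jn a u) \<in> M \<longleftrightarrow> J a \<in> M \<or> J (ng a) \<in> M"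
  using ultra_jn[of M "J a" "J (ng a)"] PJ JD by simp

lemma phi_ng: "ultra M \<Longrightarrow> a \<in> C \<Longrightarrow> phi M (ng a) = wneg (phi M a)"
  using ultra_excl[of M a] K4[of a] unfolding phi_def by auto
lemma phi_J: "ultra M \<Longrightarrow> a \<in> C \<Longrightarrow> phi M (J a) = wJ2 (phi M a)"
proof -
  assume U: "ultra M" and a: "a \<in> C"
  have e1: "J (J a) = J a" using JPid PJ a by simp
  have e2: "J (ng (J a)) = ng (J a)" using JPid Pn PJ a by simp
  have "J a \<in> M \<or> ng (J a) \<in> M" using ultra_compl U PJ a by simp
  thus ?thesis unfolding phi_def using e1 e2 by auto
qed
lemma phi_jn: "ultra M \<Longrightarrow> a \<in> C \<Longrightarrow> b \<in> C \<Longrightarrow> phi M (jn a b) = wjoin (phi M a) (phi M b)"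
proof -
  assume U: "ultra M" and a: "a \<in> C" and b: "b \<in> C"
  have xa: "\<not> (J a \<in> M \<and> J (ng a) \<in> M)" using ultra_excl U a by simp
  have xb: "\<not> (J b \<in> M \<and> J (ng b) \<in> M)" using ultra_excl U b by simp
  have xc: "\<not> (J (jn a b) \<in> M \<and> J (ng (jn a b)) \<in> M)" using ultra_excl U a b by simp
  have c0: "J (ng (jn a b)) \<in> M \<longleftrightarrow> J (ng a) \<in> M \<and> J (ng b) \<in> M"
    using dm1[of a b] JM[of "ng a" "ng b"] ultra_mt[of M "J (ng a)" "J (ng b)"] PJ U a b by simp
  have "J (jn (jn a b) u) \<in> M \<longleftrightarrow> J (jn a u) \<in> M \<and> J (jn b u) \<in> M"
    using Djoin[OF a b] ultra_mt[of M "J (jn a u)" "J (jn b u)"] PJ U a b by simp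
  hence c1: "J (jn a b) \<in> M \<or> J (ng (jn a b)) \<in> M \<longleftrightarrow> (J a \<in> M \<or> J (ng a) \<in> M) \<and> (J b \<in> M \<or> J (ng b) \<in> M)"
    using ultra_D U a b by simp
  show ?thesis unfolding phi_def using xa xb xc c0 c1 by auto
qed
lemma phi_mt: "ultra M \<Longrightarrow> a \<in> C \<Longrightarrow> b \<in> C \<Longrightarrow> phi M (mt a b) = wmeet (phi M a) (phi M b)"
  using K5[of a b] phi_jn phi_ng wmeet_def2 by simp
lemma phi_z: "ultra M \<Longrightarrow> phi M z = WZ"
  unfolding phi_def using J0 J1 K8[symmetric] ultra_z ultra_u by simp
lemma phi_u: "ultra M \<Longrightarrow> phi M u = WO"
  unfolding phi_def using J1 ultra_u by simp

lemma separate: "p \<in> P \<Longrightarrow> q \<in> P \<Longrightarrow> p \<noteq> q \<Longrightarrow> \<exists>M. ultra M \<and> phi M p \<noteq> phi M q"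
proof -
  assume pP: "p \<in> P" and qP: "q \<in> P" and ne: "p \<noteq> q"
  have p: "p \<in> C" and q: "q \<in> C" using pP qP PC by auto
  have key: "\<exists>M. ultra M \<and> phi M x \<noteq> phi M y" if xP: "x \<in> P" and yP: "y \<in> P" and nz: "mt x (ng y) \<noteq> z" for x y
  proof -
    obtain M where f: "filt M" and cM: "mt x (ng y) \<in> M" and cp: "\<forall>x\<in>P. x \<in> M \<or> ng x \<in> M"
      using ultra_exists[of "mt x (ng y)"] Pm Pn xP yP nz by blast
    have U: "ultra M" unfolding ultra_def using f cp by simp
    have "x \<in> M" "ng y \<in> M" using ultra_mt[OF U xP Pn[OF yP]] cM by auto
    hence "y \<notin> M" using ultra_not_both[OF U yP] by blast
    hence "phi M x = WO" "phi M y \<noteq> WO" unfolding phi_def using JPid xP yP \<open>x \<in> M\<close> by auto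
    thus ?thesis using U by auto
  qed
  show ?thesis
  proof (cases "mt p (ng q) = z")
    case False thus ?thesis using key pP qP by blast
  next
    case T1: True
    show ?thesis
    proof (cases "mt q (ng p) = z")
      case False thus ?thesis using key pP qP by (metis)
    next
      case T2: True
      have "p = mt p (jn q (ng q))" using Pcj qP mu p by simp
      also have "\<dots> = jn (mt p q) (mt p (ng q))" using dist pP qP Pn by simp
      also have "\<dots> = mt p q" using T1 jz p q by simp
      finally have 1: "p = mt p q" .
      have "q = mt q (jn p (ng p))" using Pcj pP mu q by simp
      also have "\<dots> = jn (mt q p) (mt q (ng p))" using dist pP qP Pn by simp
      also have "\<dots> = mt q p" using T2 jz p q by simp
      finally have "q = mt q p" .
      hence "p = q" using 1 M2 p q by simp
      thus ?thesis using ne by simp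
    qed
  qed
qed

definition inx :: "'a \<Rightarrow> 'a \<Rightarrow> bool" where "inx c a \<longleftrightarrow> jn (jn c u) a = jn c u"

lemma un2: "a \<in> C \<Longrightarrow> jn u (ng a) = jn u a" using un[of a] K2 by simp
lemma inx_jn: "c \<in> C \<Longrightarrow> a \<in> C \<Longrightarrow> b \<in> C \<Longrightarrow> inx c (jn a b) \<longleftrightarrow> inx c a \<and> inx c b"
proof -
  assume c: "c \<in> C" and a: "a \<in> C" and b: "b \<in> C"
  define n where "n = jn c u"
  have n: "n \<in> C" unfolding n_def using c by simp
  show ?thesis unfolding inx_def n_def[symmetric]
  proof
    assume h: "jn n (jn a b) = n"
    have "jn n a = jn (jn n (jn a b)) a" using h by simp
    also have "\<dots> = jn n (jn a b)" using n a b by (simp add: jac K1 Jidem)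
    finally have 1: "jn n a = n" using h by simp
    have "jn n b = jn (jn n (jn a b)) b" using h by simp
    also have "\<dots> = jn n (jn a b)" using n a b by (simp add: jac K1 Jidem)
    finally have 2: "jn n b = n" using h by simp
    show "jn n a = n \<and> jn n b = n" using 1 2 by simp
  next
    assume h: "jn n a = n \<and> jn n b = n"
    have "jn n (jn a b) = jn (jn n a) b" using K3 n a b by simp
    thus "jn n (jn a b) = n" using h by simp
  qed
qed
lemma inx_ng: "c \<in> C \<Longrightarrow> a \<in> C \<Longrightarrow> inx c (ng a) \<longleftrightarrow> inx c a"
proof -
  assume c: "c \<in> C" and a: "a \<in> C"
  have "jn (jn c u) (ng a) = jn c (jn u (ng a))" using JA c a by simp
  also have "\<dots> = jn c (jn u a)" using un2 a by simp
  also have "\<dots> = jn (jn c u) a" using K3 c a by simp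
  finally show ?thesis unfolding inx_def by simp
qed
lemma inx_mt: "c \<in> C \<Longrightarrow> a \<in> C \<Longrightarrow> b \<in> C \<Longrightarrow> inx c (mt a b) \<longleftrightarrow> inx c a \<and> inx c b"
  using K5[of a b] inx_ng inx_jn by simp
lemma inx_J: "c \<in> C \<Longrightarrow> a \<in> C \<Longrightarrow> inx c (J a)"
  unfolding inx_def using JA[of c u "J a"] uj[OF PJ[of a]] by simp
lemma inx_z: "c \<in> C \<Longrightarrow> inx c z" unfolding inx_def using jz by simp
lemma inx_u: "c \<in> C \<Longrightarrow> inx c u" unfolding inx_def using JA[of c u u] K1[of u] by simp
lemma inx_self: "a \<in> C \<Longrightarrow> inx a a" unfolding inx_def using K2[of "jn a u" a] Jidem[of a u] by simp
lemma uniq_elem: "a \<in> C \<Longrightarrow> b \<in> C \<Longrightarrow> J a = J b \<Longrightarrow> inx b a \<Longrightarrow> inx a b \<Longrightarrow> a = b"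
proof -
  assume a: "a \<in> C" and b: "b \<in> C" and JJe: "J a = J b" and h1: "inx b a" and h2: "inx a b"
  have "jn a u = jn (jn a u) b" using h2 unfolding inx_def by simp
  also have "\<dots> = jn (jn b u) a" using a b by (simp add: jac)
  also have "\<dots> = jn b u" using h1 unfolding inx_def by simp
  finally have "jn a u = jn b u" .
  hence "mt (J a) (jn a u) = mt (J b) (jn b u)" using JJe by simp
  thus "a = b" using decomp a b by simp
qed

definition hm :: "('a \<Rightarrow> wk) \<Rightarrow> bool" where
  "hm f \<longleftrightarrow> (\<forall>x\<in>C. \<forall>y\<in>C. f (jn x y) = wjoin (f x) (f y) \<and> f (mt x y) = wmeet (f x) (f y)) \<and>
     (\<forall>x\<in>C. f (ng x) = wneg (f x) \<and> f (J x) = wJ2 (f x)) \<and> f z = WZ \<and> f u = WO"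

lemma hm_phi: "ultra M \<Longrightarrow> hm (phi M)"
  unfolding hm_def using phi_jn phi_mt phi_ng phi_J phi_z phi_u by simp

lemma J_eq_from_hm: "a \<in> C \<Longrightarrow> b \<in> C \<Longrightarrow> (\<forall>f. hm f \<longrightarrow> f a = f b) \<Longrightarrow> J a = J b"
proof (rule ccontr)
  assume a: "a \<in> C" and b: "b \<in> C" and h: "\<forall>f. hm f \<longrightarrow> f a = f b" and ne: "J a \<noteq> J b"
  obtain M where U: "ultra M" and d: "phi M (J a) \<noteq> phi M (J b)" using separate[OF PJ[OF a] PJ[OF b] ne] by blast
  have "phi M a = phi M b" using h hm_phi[OF U] by simp
  thus False using d phi_J U a b by simp
qed

definition yc :: "'a \<Rightarrow> 'a \<Rightarrow> wk" where "yc c = (\<lambda>a. if inx c a then WZ else WH)"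
definition Xs :: "('a \<Rightarrow> wk) set" where "Xs = {f. hm f}"
definition Is :: "('a \<Rightarrow> wk) set" where "Is = Xs \<union> yc ` C"
definition wit :: "(('a \<Rightarrow> wk) \<Rightarrow> wk) \<Rightarrow> 'a \<Rightarrow> bool" where
  "wit g a \<longleftrightarrow> a \<in> C \<and> (\<forall>f\<in>Xs. g f = f a) \<and> (\<forall>c\<in>C. g (yc c) = WH \<longleftrightarrow> \<not> inx c a)"
definition Bs :: "(('a \<Rightarrow> wk) \<Rightarrow> wk) set" where
  "Bs = {g. (\<forall>i. i \<notin> Is \<longrightarrow> g i = undefined) \<and> (\<exists>a. wit g a)}"
definition hh :: "(('a \<Rightarrow> wk) \<Rightarrow> wk) \<Rightarrow> 'a" where "hh g = (THE a. wit g a)"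

lemma wit_uniq: "wit g a \<Longrightarrow> wit g b \<Longrightarrow> a = b"
proof -
  assume wa: "wit g a" and wb: "wit g b"
  have a: "a \<in> C" and Xa: "\<forall>f\<in>Xs. g f = f a" and Ya: "\<forall>c\<in>C. g (yc c) = WH \<longleftrightarrow> \<not> inx c a"
    using wa unfolding wit_def by blast+
  have b: "b \<in> C" and Xb: "\<forall>f\<in>Xs. g f = f b" and Yb: "\<forall>c\<in>C. g (yc c) = WH \<longleftrightarrow> \<not> inx c b"
    using wb unfolding wit_def by blast+
  have "\<forall>f. hm f \<longrightarrow> f a = f b"
  proof (intro allI impI)
    fix f assume "hm f"
    hence "f \<in> Xs" unfolding Xs_def by simp
    thus "f a = f b" using Xa Xb by metis
  qed
  hence JJe: "J a = J b" using J_eq_from_hm a b by blast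
  have "g (yc b) \<noteq> WH" using Yb b inx_self[OF b] by blast
  hence 1: "inx b a" using Ya b by blast
  have "g (yc a) \<noteq> WH" using Ya a inx_self[OF a] by blast
  hence 2: "inx a b" using Yb a by blast
  show "a = b" using uniq_elem[OF a b JJe 1 2] .
qed
lemma hh_eq: "wit g a \<Longrightarrow> hh g = a"
proof -
  assume w: "wit g a"
  show "hh g = a" unfolding hh_def
  proof (rule the_equality)
    show "wit g a" by (rule w)
  next
    fix x assume "wit g x"
    thus "x = a" using wit_uniq w by blast
  qed
qed

lemma construct:
  fixes A :: "('a, 'b) alg_scheme"
  assumes eqs: "carrier A = C" "meet A = mt" "join A = jn" "neg A = ng" "jtwo A = J" "zero A = z" "one A = u"
  shows "subuniverse Bs (wk_power Is) \<and> hom_onto hh Bs (wk_power Is) A"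
proof -
  let ?P = "wk_power Is"
  have ycI: "c \<in> C \<Longrightarrow> yc c \<in> Is" for c unfolding Is_def by auto
  have XI: "f \<in> Xs \<Longrightarrow> f \<in> Is" for f unfolding Is_def by auto
  have car: "carrier ?P = {f. \<forall>i. i \<notin> Is \<longrightarrow> f i = undefined}" unfolding wk_power_def by simp
  have opm: "meet ?P = (\<lambda>f g i. if i \<in> Is then wmeet (f i) (g i) else undefined)" unfolding wk_power_def by simp
  have opj: "join ?P = (\<lambda>f g i. if i \<in> Is then wjoin (f i) (g i) else undefined)" unfolding wk_power_def by simp
  have opn: "neg ?P = (\<lambda>f i. if i \<in> Is then wneg (f i) else undefined)" unfolding wk_power_def by simp
  have opJ: "jtwo ?P = (\<lambda>f i. if i \<in> Is then wJ2 (f i) else undefined)" unfolding wk_power_def by simp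
  have opz: "zero ?P = (\<lambda>i. if i \<in> Is then WZ else undefined)" unfolding wk_power_def by simp
  have opu: "one ?P = (\<lambda>i. if i \<in> Is then WO else undefined)" unfolding wk_power_def by simp
  have hmD: "f \<in> Xs \<Longrightarrow> x \<in> C \<Longrightarrow> y \<in> C \<Longrightarrow> f (jn x y) = wjoin (f x) (f y) \<and> f (mt x y) = wmeet (f x) (f y) \<and>
     f (ng x) = wneg (f x) \<and> f (J x) = wJ2 (f x) \<and> f z = WZ \<and> f u = WO" for f x y
    unfolding Xs_def hm_def by auto
  have hmD1: "f \<in> Xs \<Longrightarrow> x \<in> C \<Longrightarrow> f (ng x) = wneg (f x) \<and> f (J x) = wJ2 (f x)" for f x
    unfolding Xs_def hm_def by auto
  have hmD0: "f \<in> Xs \<Longrightarrow> f z = WZ \<and> f u = WO" for f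
    unfolding Xs_def hm_def by auto
  have wB: "g \<in> Bs \<Longrightarrow> wit g (hh g)" for g
    unfolding Bs_def using hh_eq by auto
  have Bext: "g \<in> Bs \<Longrightarrow> i \<notin> Is \<Longrightarrow> g i = undefined" for g i unfolding Bs_def by auto
  have inB: "(\<forall>i. i \<notin> Is \<longrightarrow> g i = undefined) \<Longrightarrow> wit g a \<Longrightarrow> g \<in> Bs" for g a unfolding Bs_def by auto
  have wmt: "wit (meet ?P g1 g2) (mt a1 a2)" if w1: "wit g1 a1" and w2: "wit g2 a2" for g1 g2 a1 a2
  proof -
    have a1: "a1 \<in> C" and a2: "a2 \<in> C" using w1 w2 wit_def by auto
    have X1: "\<forall>f\<in>Xs. g1 f = f a1" and X2: "\<forall>f\<in>Xs. g2 f = f a2" using w1 w2 wit_def by auto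
    have Y1: "\<forall>c\<in>C. g1 (yc c) = WH \<longleftrightarrow> \<not> inx c a1" and Y2: "\<forall>c\<in>C. g2 (yc c) = WH \<longleftrightarrow> \<not> inx c a2"
      using w1 w2 wit_def by auto
    show ?thesis unfolding wit_def opm
    proof (intro conjI ballI)
      show "mt a1 a2 \<in> C" using a1 a2 by simp
    next
      fix f assume f: "f \<in> Xs"
      show "(if f \<in> Is then wmeet (g1 f) (g2 f) else undefined) = f (mt a1 a2)"
        using XI[OF f] X1 X2 f hmD[OF f a1 a2] by simp
    next
      fix c assume c: "c \<in> C"
      show "((if yc c \<in> Is then wmeet (g1 (yc c)) (g2 (yc c)) else undefined) = WH) = (\<not> inx c (mt a1 a2))"
        using ycI[OF c] Y1 Y2 c inx_mt[OF c a1 a2] wH(1) by simp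
    qed
  qed
  have wjn: "wit (join ?P g1 g2) (jn a1 a2)" if w1: "wit g1 a1" and w2: "wit g2 a2" for g1 g2 a1 a2
  proof -
    have a1: "a1 \<in> C" and a2: "a2 \<in> C" using w1 w2 wit_def by auto
    have X1: "\<forall>f\<in>Xs. g1 f = f a1" and X2: "\<forall>f\<in>Xs. g2 f = f a2" using w1 w2 wit_def by auto
    have Y1: "\<forall>c\<in>C. g1 (yc c) = WH \<longleftrightarrow> \<not> inx c a1" and Y2: "\<forall>c\<in>C. g2 (yc c) = WH \<longleftrightarrow> \<not> inx c a2"
      using w1 w2 wit_def by auto
    show ?thesis unfolding wit_def opj
    proof (intro conjI ballI)
      show "jn a1 a2 \<in> C" using a1 a2 by simp
    next
      fix f assume f: "f \<in> Xs"
      show "(if f \<in> Is then wjoin (g1 f) (g2 f) else undefined) = f (jn a1 a2)"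
        using XI[OF f] X1 X2 f hmD[OF f a1 a2] by simp
    next
      fix c assume c: "c \<in> C"
      show "((if yc c \<in> Is then wjoin (g1 (yc c)) (g2 (yc c)) else undefined) = WH) = (\<not> inx c (jn a1 a2))"
        using ycI[OF c] Y1 Y2 c inx_jn[OF c a1 a2] wH(2) by simp
    qed
  qed
  have wng: "wit (neg ?P g1) (ng a1)" if w1: "wit g1 a1" for g1 a1
  proof -
    have a1: "a1 \<in> C" using w1 wit_def by auto
    have X1: "\<forall>f\<in>Xs. g1 f = f a1" using w1 wit_def by auto
    have Y1: "\<forall>c\<in>C. g1 (yc c) = WH \<longleftrightarrow> \<not> inx c a1" using w1 wit_def by auto
    show ?thesis unfolding wit_def opn
    proof (intro conjI ballI)
      show "ng a1 \<in> C" using a1 by simp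
    next
      fix f assume f: "f \<in> Xs"
      show "(if f \<in> Is then wneg (g1 f) else undefined) = f (ng a1)"
        using XI[OF f] X1 f hmD1[OF f a1] by simp
    next
      fix c assume c: "c \<in> C"
      show "((if yc c \<in> Is then wneg (g1 (yc c)) else undefined) = WH) = (\<not> inx c (ng a1))"
        using ycI[OF c] Y1 c inx_ng[OF c a1] wH(3) by simp
    qed
  qed
  have wJ: "wit (jtwo ?P g1) (J a1)" if w1: "wit g1 a1" for g1 a1
  proof -
    have a1: "a1 \<in> C" using w1 wit_def by auto
    have X1: "\<forall>f\<in>Xs. g1 f = f a1" using w1 wit_def by auto
    show ?thesis unfolding wit_def opJ
    proof (intro conjI ballI)
      show "J a1 \<in> C" using a1 by simp
    next
      fix f assume f: "f \<in> Xs"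
      show "(if f \<in> Is then wJ2 (g1 f) else undefined) = f (J a1)"
        using XI[OF f] X1 f hmD1[OF f a1] by simp
    next
      fix c assume c: "c \<in> C"
      show "((if yc c \<in> Is then wJ2 (g1 (yc c)) else undefined) = WH) = (\<not> inx c (J a1))"
        using ycI[OF c] c inx_J[OF c a1] wH(4) by simp
    qed
  qed
  have wz: "wit (zero ?P) z"
    unfolding wit_def opz
  proof (intro conjI ballI)
    show "z \<in> C" by simp
  next
    fix f assume f: "f \<in> Xs"
    show "(if f \<in> Is then WZ else undefined) = f z" using XI[OF f] hmD0[OF f] by simp
  next
    fix c assume c: "c \<in> C"
    show "((if yc c \<in> Is then WZ else undefined) = WH) = (\<not> inx c z)" using ycI[OF c] inx_z[OF c] by simp
  qed
  have wu: "wit (one ?P) u"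
    unfolding wit_def opu
  proof (intro conjI ballI)
    show "u \<in> C" by simp
  next
    fix f assume f: "f \<in> Xs"
    show "(if f \<in> Is then WO else undefined) = f u" using XI[OF f] hmD0[OF f] by simp
  next
    fix c assume c: "c \<in> C"
    show "((if yc c \<in> Is then WO else undefined) = WH) = (\<not> inx c u)" using ycI[OF c] inx_u[OF c] by simp
  qed
  have ext2: "\<forall>i. i \<notin> Is \<longrightarrow> meet ?P g1 g2 i = undefined" "\<forall>i. i \<notin> Is \<longrightarrow> join ?P g1 g2 i = undefined"
    "\<forall>i. i \<notin> Is \<longrightarrow> neg ?P g1 i = undefined" "\<forall>i. i \<notin> Is \<longrightarrow> jtwo ?P g1 i = undefined"
    "\<forall>i. i \<notin> Is \<longrightarrow> zero ?P i = undefined" "\<forall>i. i \<notin> Is \<longrightarrow> one ?P i = undefined" for g1 g2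
    using opm opj opn opJ opz opu by auto
  have sub: "subuniverse Bs ?P"
    unfolding subuniverse_def
  proof (intro conjI ballI)
    show "Bs \<subseteq> carrier ?P" using car Bext by auto
  next
    fix x y assume x: "x \<in> Bs" and y: "y \<in> Bs"
    show "meet ?P x y \<in> Bs" using inB[OF ext2(1) wmt[OF wB[OF x] wB[OF y]]] .
    show "join ?P x y \<in> Bs" using inB[OF ext2(2) wjn[OF wB[OF x] wB[OF y]]] .
  next
    fix x assume x: "x \<in> Bs"
    show "neg ?P x \<in> Bs" using inB[OF ext2(3) wng[OF wB[OF x]]] .
    show "jtwo ?P x \<in> Bs" using inB[OF ext2(4) wJ[OF wB[OF x]]] .
  next
    show "zero ?P \<in> Bs" using inB[OF ext2(5) wz] .
    show "one ?P \<in> Bs" using inB[OF ext2(6) wu] .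
  qed
  have img: "hh ` Bs = C"
  proof
    show "hh ` Bs \<subseteq> C" using wB wit_def by auto
  next
    show "C \<subseteq> hh ` Bs"
    proof
      fix a assume a: "a \<in> C"
      define g where "g = (\<lambda>i. if i \<in> Is then i a else undefined)"
      have "wit g a" unfolding wit_def g_def using a XI ycI by (auto simp: yc_def)
      hence "g \<in> Bs" "hh g = a" using inB[of g a] hh_eq unfolding g_def by auto
      thus "a \<in> hh ` Bs" by force
    qed
  qed
  have "hom_onto hh Bs ?P A"
    unfolding hom_onto_def eqs
  proof (intro conjI ballI)
    show "hh ` Bs = C" by (rule img)
  next
    fix x y assume x: "x \<in> Bs" and y: "y \<in> Bs"
    show "hh (meet ?P x y) = mt (hh x) (hh y)" using hh_eq[OF wmt[OF wB[OF x] wB[OF y]]] .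
    show "hh (join ?P x y) = jn (hh x) (hh y)" using hh_eq[OF wjn[OF wB[OF x] wB[OF y]]] .
  next
    fix x assume x: "x \<in> Bs"
    show "hh (neg ?P x) = ng (hh x)" using hh_eq[OF wng[OF wB[OF x]]] .
    show "hh (jtwo ?P x) = J (hh x)" using hh_eq[OF wJ[OF wB[OF x]]] .
  next
    show "hh (zero ?P) = z" using hh_eq[OF wz] .
    show "hh (one ?P) = u" using hh_eq[OF wu] .
  qed
  thus ?thesis using sub by simp
qed

end
lemma wk_ids:
  "wjoin x x = x" "wjoin x y = wjoin y x" "wjoin x (wjoin y w) = wjoin (wjoin x y) w"
  "wneg (wneg x) = x" "wmeet x y = wneg (wjoin (wneg x) (wneg y))"
  "wmeet x (wjoin (wneg x) y) = wmeet x y" "wjoin WZ x = x" "WO = wneg WZ"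
  "wjoin (wJ2 x) (wneg (wJ2 x)) = WO" "wjoin x (wJ2 y) = wjoin x (wJ2 (wjoin x y))"
  "wmeet x (wJ2 x) = x" "wJ2 (wmeet x (wneg x)) = WZ"
  by (cases x; cases y; cases w; simp)+

lemma pw_ops:
  "meet (wk_power I) = (\<lambda>f g i. if i \<in> I then wmeet (f i) (g i) else undefined)"
  "join (wk_power I) = (\<lambda>f g i. if i \<in> I then wjoin (f i) (g i) else undefined)"
  "neg (wk_power I) = (\<lambda>f i. if i \<in> I then wneg (f i) else undefined)"
  "jtwo (wk_power I) = (\<lambda>f i. if i \<in> I then wJ2 (f i) else undefined)"
  "zero (wk_power I) = (\<lambda>i. if i \<in> I then WZ else undefined)"
  "one (wk_power I) = (\<lambda>i. if i \<in> I then WO else undefined)"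
  "carrier (wk_power I) = {f. \<forall>i. i \<notin> I \<longrightarrow> f i = undefined}"
  unfolding wk_power_def by simp_all

lemma sound:
  fixes A :: "('a, 'b) alg_scheme" and I :: "'i set"
  assumes sub: "subuniverse B (wk_power I)" and hom: "hom_onto h B (wk_power I) A"
  shows "sat_K A"
proof -
  let ?P = "wk_power I"
  have exB: "f \<in> B \<Longrightarrow> i \<notin> I \<Longrightarrow> f i = undefined" for f i
    using sub unfolding subuniverse_def pw_ops by blast
  have cl: "f \<in> B \<Longrightarrow> g \<in> B \<Longrightarrow> meet ?P f g \<in> B" "f \<in> B \<Longrightarrow> g \<in> B \<Longrightarrow> join ?P f g \<in> B"
    "f \<in> B \<Longrightarrow> neg ?P f \<in> B" "f \<in> B \<Longrightarrow> jtwo ?P f \<in> B" "zero ?P \<in> B" "one ?P \<in> B" for f g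
    using sub unfolding subuniverse_def by blast+
  have hm: "f \<in> B \<Longrightarrow> g \<in> B \<Longrightarrow> meet A (h f) (h g) = h (meet ?P f g)"
    "f \<in> B \<Longrightarrow> g \<in> B \<Longrightarrow> join A (h f) (h g) = h (join ?P f g)"
    "f \<in> B \<Longrightarrow> neg A (h f) = h (neg ?P f)" "f \<in> B \<Longrightarrow> jtwo A (h f) = h (jtwo ?P f)"
    "zero A = h (zero ?P)" "one A = h (one ?P)" for f g
    using hom unfolding hom_onto_def by simp_all
  have img: "h ` B = carrier A" using hom unfolding hom_onto_def by simp
  show ?thesis unfolding sat_K_def
  proof (intro ballI)
    fix x y w assume "x \<in> carrier A" "y \<in> carrier A" "w \<in> carrier A"
    then obtain f g k where f: "f \<in> B" "x = h f" and g: "g \<in> B" "y = h g" and k: "k \<in> B" "w = h k"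
      using img by (metis imageE)
    have fe: "\<And>i. i \<notin> I \<Longrightarrow> f i = undefined" using exB f(1) by blast
    have e1: "(\<lambda>i. if i \<in> I then F (f i) else undefined) = f" if "\<And>x. F x = x" for F
      using fe that by (intro ext) auto
    note cls = cl f(1) g(1) k(1)
    have p1: "join ?P f f = f"
      unfolding pw_ops
      apply (rule ext)
      subgoal for i by (cases "i \<in> I", (cases "f i"; cases "g i"; cases "k i"; simp), simp add: fe)
      done
    have l1: "join A (h f) (h f) = h (join ?P f f)" by (simp only: hm cls)
    have r1: "(h f) = h (f)" by (simp only: hm cls)
    have q1: "join A (h f) (h f) = (h f)" using l1 r1 p1 by simp
    have p2: "join ?P f g = join ?P g f"
      unfolding pw_ops
      apply (rule ext)
      subgoal for i by (cases "i \<in> I", (cases "f i"; cases "g i"; cases "k i"; simp), simp add: fe)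
      done
    have l2: "join A (h f) (h g) = h (join ?P f g)" by (simp only: hm cls)
    have r2: "join A (h g) (h f) = h (join ?P g f)" by (simp only: hm cls)
    have q2: "join A (h f) (h g) = join A (h g) (h f)" using l2 r2 p2 by simp
    have p3: "join ?P f (join ?P g k) = join ?P (join ?P f g) k"
      unfolding pw_ops
      apply (rule ext)
      subgoal for i by (cases "i \<in> I", (cases "f i"; cases "g i"; cases "k i"; simp), simp add: fe)
      done
    have l3: "join A (h f) (join A (h g) (h k)) = h (join ?P f (join ?P g k))" by (simp only: hm cls)
    have r3: "join A (join A (h f) (h g)) (h k) = h (join ?P (join ?P f g) k)" by (simp only: hm cls)
    have q3: "join A (h f) (join A (h g) (h k)) = join A (join A (h f) (h g)) (h k)" using l3 r3 p3 by simp
    have p4: "neg ?P (neg ?P f) = f"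
      unfolding pw_ops
      apply (rule ext)
      subgoal for i by (cases "i \<in> I", (cases "f i"; cases "g i"; cases "k i"; simp), simp add: fe)
      done
    have l4: "neg A (neg A (h f)) = h (neg ?P (neg ?P f))" by (simp only: hm cls)
    have r4: "(h f) = h (f)" by (simp only: hm cls)
    have q4: "neg A (neg A (h f)) = (h f)" using l4 r4 p4 by simp
    have p5: "meet ?P f g = neg ?P (join ?P (neg ?P f) (neg ?P g))"
      unfolding pw_ops
      apply (rule ext)
      subgoal for i by (cases "i \<in> I", (cases "f i"; cases "g i"; cases "k i"; simp), simp add: fe)
      done
    have l5: "meet A (h f) (h g) = h (meet ?P f g)" by (simp only: hm cls)
    have r5: "neg A (join A (neg A (h f)) (neg A (h g))) = h (neg ?P (join ?P (neg ?P f) (neg ?P g)))" by (simp only: hm cls)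
    have q5: "meet A (h f) (h g) = neg A (join A (neg A (h f)) (neg A (h g)))" using l5 r5 p5 by simp
    have p6: "meet ?P f (join ?P (neg ?P f) g) = meet ?P f g"
      unfolding pw_ops
      apply (rule ext)
      subgoal for i by (cases "i \<in> I", (cases "f i"; cases "g i"; cases "k i"; simp), simp add: fe)
      done
    have l6: "meet A (h f) (join A (neg A (h f)) (h g)) = h (meet ?P f (join ?P (neg ?P f) g))" by (simp only: hm cls)
    have r6: "meet A (h f) (h g) = h (meet ?P f g)" by (simp only: hm cls)
    have q6: "meet A (h f) (join A (neg A (h f)) (h g)) = meet A (h f) (h g)" using l6 r6 p6 by simp
    have p7: "join ?P (zero ?P) f = f"
      unfolding pw_ops
      apply (rule ext)
      subgoal for i by (cases "i \<in> I", (cases "f i"; cases "g i"; cases "k i"; simp), simp add: fe)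
      done
    have l7: "join A (zero A) (h f) = h (join ?P (zero ?P) f)" by (simp only: hm cls)
    have r7: "(h f) = h (f)" by (simp only: hm cls)
    have q7: "join A (zero A) (h f) = (h f)" using l7 r7 p7 by simp
    have p8: "one ?P = neg ?P (zero ?P)"
      unfolding pw_ops
      apply (rule ext)
      subgoal for i by (cases "i \<in> I", (cases "f i"; cases "g i"; cases "k i"; simp), simp add: fe)
      done
    have l8: "one A = h (one ?P)" by (simp only: hm cls)
    have r8: "neg A (zero A) = h (neg ?P (zero ?P))" by (simp only: hm cls)
    have q8: "one A = neg A (zero A)" using l8 r8 p8 by simp
    have p9: "join ?P (jtwo ?P f) (neg ?P (jtwo ?P f)) = one ?P"
      unfolding pw_ops
      apply (rule ext)
      subgoal for i by (cases "i \<in> I", (cases "f i"; cases "g i"; cases "k i"; simp), simp add: fe)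
      done
    have l9: "join A (jtwo A (h f)) (neg A (jtwo A (h f))) = h (join ?P (jtwo ?P f) (neg ?P (jtwo ?P f)))" by (simp only: hm cls)
    have r9: "one A = h (one ?P)" by (simp only: hm cls)
    have q9: "join A (jtwo A (h f)) (neg A (jtwo A (h f))) = one A" using l9 r9 p9 by simp
    have p10: "join ?P f (jtwo ?P g) = join ?P f (jtwo ?P (join ?P f g))"
      unfolding pw_ops
      apply (rule ext)
      subgoal for i by (cases "i \<in> I", (cases "f i"; cases "g i"; cases "k i"; simp), simp add: fe)
      done
    have l10: "join A (h f) (jtwo A (h g)) = h (join ?P f (jtwo ?P g))" by (simp only: hm cls)
    have r10: "join A (h f) (jtwo A (join A (h f) (h g))) = h (join ?P f (jtwo ?P (join ?P f g)))" by (simp only: hm cls)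
    have q10: "join A (h f) (jtwo A (h g)) = join A (h f) (jtwo A (join A (h f) (h g)))" using l10 r10 p10 by simp
    have p11: "meet ?P f (jtwo ?P f) = f"
      unfolding pw_ops
      apply (rule ext)
      subgoal for i by (cases "i \<in> I", (cases "f i"; cases "g i"; cases "k i"; simp), simp add: fe)
      done
    have l11: "meet A (h f) (jtwo A (h f)) = h (meet ?P f (jtwo ?P f))" by (simp only: hm cls)
    have r11: "(h f) = h (f)" by (simp only: hm cls)
    have q11: "meet A (h f) (jtwo A (h f)) = (h f)" using l11 r11 p11 by simp
    have p12: "jtwo ?P (meet ?P f (neg ?P f)) = zero ?P"
      unfolding pw_ops
      apply (rule ext)
      subgoal for i by (cases "i \<in> I", (cases "f i"; cases "g i"; cases "k i"; simp), simp add: fe)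
      done
    have l12: "jtwo A (meet A (h f) (neg A (h f))) = h (jtwo ?P (meet ?P f (neg ?P f)))" by (simp only: hm cls)
    have r12: "zero A = h (zero ?P)" by (simp only: hm cls)
    have q12: "jtwo A (meet A (h f) (neg A (h f))) = zero A" using l12 r12 p12 by simp
    show "join A x x = x \<and> join A x y = join A y x \<and> join A x (join A y w) = join A (join A x y) w \<and> neg A (neg A x) = x \<and> meet A x y = neg A (join A (neg A x) (neg A y)) \<and> meet A x (join A (neg A x) y) = meet A x y \<and> join A (zero A) x = x \<and> one A = neg A (zero A) \<and> join A (jtwo A x) (neg A (jtwo A x)) = one A \<and> join A x (jtwo A y) = join A x (jtwo A (join A x y)) \<and> meet A x (jtwo A x) = x \<and> jtwo A (meet A x (neg A x)) = zero A"
      unfolding f(2) g(2) k(2) using q1 q2 q3 q4 q5 q6 q7 q8 q9 q10 q11 q12 by blast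
  qed
qed

lemma kalg_of:
  fixes A :: "('a, 'b) alg_scheme"
  assumes "algebra A" and "sat_K A"
  shows "kalg (carrier A) (join A) (meet A) (neg A) (jtwo A) (zero A) (one A)"
proof -
  have c: "\<And>x y. x \<in> carrier A \<Longrightarrow> y \<in> carrier A \<Longrightarrow> join A x y \<in> carrier A"
    "\<And>x y. x \<in> carrier A \<Longrightarrow> y \<in> carrier A \<Longrightarrow> meet A x y \<in> carrier A"
    "\<And>x. x \<in> carrier A \<Longrightarrow> neg A x \<in> carrier A" "\<And>x. x \<in> carrier A \<Longrightarrow> jtwo A x \<in> carrier A"
    "zero A \<in> carrier A" "one A \<in> carrier A"
    using assms(1) unfolding algebra_def by blast+
  have KK: "\<And>x y w. x \<in> carrier A \<Longrightarrow> y \<in> carrier A \<Longrightarrow> w \<in> carrier A \<Longrightarrow>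
     join A x x = x \<and>
     join A x y = join A y x \<and>
     join A x (join A y w) = join A (join A x y) w \<and>
     neg A (neg A x) = x \<and>
     meet A x y = neg A (join A (neg A x) (neg A y)) \<and>
     meet A x (join A (neg A x) y) = meet A x y \<and>
     join A (zero A) x = x \<and>
     one A = neg A (zero A) \<and>
     join A (jtwo A x) (neg A (jtwo A x)) = one A \<and>
     join A x (jtwo A y) = join A x (jtwo A (join A x y)) \<and>
     meet A x (jtwo A x) = x \<and>
     jtwo A (meet A x (neg A x)) = zero A"
    using assms(2) unfolding sat_K_def by blast
  have K1: "\<And>x y w. x \<in> carrier A \<Longrightarrow> y \<in> carrier A \<Longrightarrow> w \<in> carrier A \<Longrightarrow> join A x x = x" using KK by simp
  have K2: "\<And>x y w. x \<in> carrier A \<Longrightarrow> y \<in> carrier A \<Longrightarrow> w \<in> carrier A \<Longrightarrow> join A x y = join A y x" using KK by simp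
  have K3: "\<And>x y w. x \<in> carrier A \<Longrightarrow> y \<in> carrier A \<Longrightarrow> w \<in> carrier A \<Longrightarrow> join A x (join A y w) = join A (join A x y) w" using KK by simp
  have K4: "\<And>x y w. x \<in> carrier A \<Longrightarrow> y \<in> carrier A \<Longrightarrow> w \<in> carrier A \<Longrightarrow> neg A (neg A x) = x" using KK by simp
  have K5: "\<And>x y w. x \<in> carrier A \<Longrightarrow> y \<in> carrier A \<Longrightarrow> w \<in> carrier A \<Longrightarrow> meet A x y = neg A (join A (neg A x) (neg A y))" using KK by simp
  have K6: "\<And>x y w. x \<in> carrier A \<Longrightarrow> y \<in> carrier A \<Longrightarrow> w \<in> carrier A \<Longrightarrow> meet A x (join A (neg A x) y) = meet A x y" using KK by simp
  have K7: "\<And>x y w. x \<in> carrier A \<Longrightarrow> y \<in> carrier A \<Longrightarrow> w \<in> carrier A \<Longrightarrow> join A (zero A) x = x" using KK by simp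
  have K8: "one A = neg A (zero A)" using KK[OF c(5) c(5) c(5)] by simp
  have K9: "\<And>x y w. x \<in> carrier A \<Longrightarrow> y \<in> carrier A \<Longrightarrow> w \<in> carrier A \<Longrightarrow> join A (jtwo A x) (neg A (jtwo A x)) = one A" using KK by simp
  have K10: "\<And>x y w. x \<in> carrier A \<Longrightarrow> y \<in> carrier A \<Longrightarrow> w \<in> carrier A \<Longrightarrow> join A x (jtwo A y) = join A x (jtwo A (join A x y))" using KK by simp
  have K11: "\<And>x y w. x \<in> carrier A \<Longrightarrow> y \<in> carrier A \<Longrightarrow> w \<in> carrier A \<Longrightarrow> meet A x (jtwo A x) = x" using KK by simp
  have K12: "\<And>x y w. x \<in> carrier A \<Longrightarrow> y \<in> carrier A \<Longrightarrow> w \<in> carrier A \<Longrightarrow> jtwo A (meet A x (neg A x)) = zero A" using KK by simp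
  have K1': "\<And>x. x \<in> carrier A \<Longrightarrow> join A x x = x" using K1 by blast
  have K4': "\<And>x. x \<in> carrier A \<Longrightarrow> neg A (neg A x) = x" using K4 by blast
  have K7': "\<And>x. x \<in> carrier A \<Longrightarrow> join A (zero A) x = x" using K7 by blast
  have K9': "\<And>x. x \<in> carrier A \<Longrightarrow> join A (jtwo A x) (neg A (jtwo A x)) = one A" using K9 by blast
  have K11': "\<And>x. x \<in> carrier A \<Longrightarrow> meet A x (jtwo A x) = x" using K11 by blast
  have K12': "\<And>x. x \<in> carrier A \<Longrightarrow> jtwo A (meet A x (neg A x)) = zero A" using K12 by blast
  have K2': "\<And>x y. x \<in> carrier A \<Longrightarrow> y \<in> carrier A \<Longrightarrow> join A x y = join A y x" using K2 by blast
  have K5': "\<And>x y. x \<in> carrier A \<Longrightarrow> y \<in> carrier A \<Longrightarrow> meet A x y = neg A (join A (neg A x) (neg A y))" using K5 by blast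
  have K6': "\<And>x y. x \<in> carrier A \<Longrightarrow> y \<in> carrier A \<Longrightarrow> meet A x (join A (neg A x) y) = meet A x y" using K6 by blast
  have K10': "\<And>x y. x \<in> carrier A \<Longrightarrow> y \<in> carrier A \<Longrightarrow> join A x (jtwo A y) = join A x (jtwo A (join A x y))" using K10 by blast
  show ?thesis
    by unfold_locales (assumption | rule c K1' K2' K3 K4' K5' K6' K7' K8 K9' K10' K11' K12')+
qed

theorem theorem4p5:
  fixes A :: "('a, 'b) alg_scheme"
  assumes "algebra A"
  shows "(\<forall>I :: 'i set. in_HSP I A \<longrightarrow> sat_K A) \<and> (sat_K A \<longleftrightarrow> in_V_WK A)"
proof -
  have S1: "\<forall>I :: 'i set. in_HSP I A \<longrightarrow> sat_K A"
    unfolding in_HSP_def using sound by blast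
  have S2: "in_V_WK A \<Longrightarrow> sat_K A"
    unfolding in_V_WK_def in_HSP_def using sound by blast
  have S3: "sat_K A \<Longrightarrow> in_V_WK A"
  proof -
    assume K: "sat_K A"
    interpret KA: kalg "carrier A" "join A" "meet A" "neg A" "jtwo A" "zero A" "one A"
      using kalg_of[OF assms K] .
    have "subuniverse KA.Bs (wk_power KA.Is) \<and> hom_onto KA.hh KA.Bs (wk_power KA.Is) A"
      using KA.construct[of A] by simp
    thus "in_V_WK A" unfolding in_V_WK_def in_HSP_def using assms by blast
  qed
  show ?thesis using S1 S2 S3 by blast
qed

end
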